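(* Let $m_1,\Theta_1>0$, $\kappa>0$, and $\mathcal{M}_1(\bar w)=(\frac{m_1}{2\pi\Theta_1})^{3/2}\exp(-\frac{m_1|\bar w|^2}{2\Theta_1})$ for $\bar w\in\mathbb{R}^2$. Given $\varrho_0>0$, there exists $\varrho_1>0$ such that $$\int_{\{|\bar w-\bar v|\le\varrho_1\}}\frac{\mathcal{M}_1(\bar w)}{(|\bar v-\bar w|^2+\xi^2)^{1/2}}\,\mathrm{d}\bar w\leq\frac12\int_{\mathbb{R}^2}\frac{\mathcal{M}_1(\bar w)}{(|\bar v-\bar w|^2+\xi^2)^{1/2}}\,\mathrm{d}\bar w$$ for all $\bar v\in\mathbb{R}^2$ and all $\xi\in[0,\varrho_0/(2\kappa)]$. Moreover, setting $\eta=\sqrt{\frac{2\Theta_1}{m_1}}\,\mathrm{erf}^{-1}(\tfrac12)$, such a $\varrho_1$ can be chosen with $\varrho_1\geq\big(\eta^2-\frac{\varrho_0^2}{4\kappa^2}\big)^{1/2}$ whenever $0<\varrho_0<2\kappa\eta$.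
   Context: $\mathrm{erf}(x)=\frac{2}{\sqrt\pi}\int_0^x e^{-t^2}\,\mathrm{d}t$ is the error function and $\mathrm{erf}^{-1}$ its inverse. In the paper $\kappa=\alpha(1-\beta)\in(0,1)$ is the inelasticity parameter of the model. *)

theory Defs
  imports "HOL-Analysis.Analysis"
begin

definition erf :: "real \<Rightarrow> real" where
  "erf x = 2 / sqrt pi * (LBINT t=0..x. exp (- (t^2)))"

text \<open>Inverse of erf (erf is strictly increasing, so THE is well defined on its range).\<close>
definition erf_inv :: "real \<Rightarrow> real" where
  "erf_inv y = (THE x. erf x = y)"

text \<open>The Maxwellian M_1 on R^2, with the normalisation constant as written in the paper.\<close>
definition M1 :: "real \<Rightarrow> real \<Rightarrow> real^2 \<Rightarrow> real" where
  "M1 m\<^sub>1 \<Theta>\<^sub>1 w = (m\<^sub>1 / (2 * pi * \<Theta>\<^sub>1)) powr (3/2) * exp (- (m\<^sub>1 * (norm w)^2 / (2 * \<Theta>\<^sub>1)))"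

end

theory Submission
  imports Defs "HOL-Probability.Distributions"
begin


definition vec2 :: "real \<Rightarrow> real \<Rightarrow> real^2" where
  "vec2 x y = (\<chi> i. if i = 1 then x else y)"

lemma vec2_nth[simp]: "vec2 x y $ 1 = x" "vec2 x y $ 2 = y"
  by (simp_all add: vec2_def)

lemma vec2_eta: "vec2 (u$1) (u$2) = u"
  by (simp add: vec_eq_iff forall_2)

lemma vec2_cont: "continuous_on UNIV (\<lambda>p::real\<times>real. vec2 (fst p) (snd p))"
  unfolding vec2_def
  apply (rule continuous_on_vec_lambda)
  subgoal for i by (cases "i = 1") (auto intro: continuous_intros)
  done

lemma vec2_meas[measurable]: "(\<lambda>p::real\<times>real. vec2 (fst p) (snd p)) \<in> borel_measurable borel"
  by (rule borel_measurable_continuous_onI[OF vec2_cont])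

lemma basis_prod_2: "(\<Prod>b\<in>(Basis::(real^2) set). f b) = f (axis 1 1) * f (axis 2 1)"
proof -
  have B: "(Basis::(real^2) set) = {axis 1 1, axis 2 1}"
    by (auto simp: Basis_vec_def UNIV_2)
  have "axis 1 (1::real) \<noteq> (axis 2 1 :: real^2)"
    by (simp add: axis_eq_axis)
  then show ?thesis
    by (subst B) simp
qed

lemma lborel_vec2: "distr (lborel :: (real\<times>real) measure) borel (\<lambda>p. vec2 (fst p) (snd p)) = lborel"
proof (rule lborel_eqI[symmetric])
  fix l u :: "real^2" assume le: "\<And>b. b\<in>Basis \<Longrightarrow> l\<bullet>b \<le> u\<bullet>b"
  have l1: "l$1 \<le> u$1" using le[of "axis 1 1"] by (auto simp: Basis_vec_def inner_axis)
  have l2: "l$2 \<le> u$2" using le[of "axis 2 1"] by (auto simp: Basis_vec_def inner_axis)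
  have pre: "(\<lambda>p. vec2 (fst p) (snd p)) -` box l u = {l$1<..<u$1} \<times> {l$2<..<u$2}"
    by (auto simp: mem_box_cart forall_2)
  have "emeasure (distr (lborel :: (real\<times>real) measure) borel (\<lambda>p. vec2 (fst p) (snd p))) (box l u)
      = emeasure (lborel \<Otimes>\<^sub>M lborel) ({l$1<..<u$1} \<times> {l$2<..<u$2})"
    by (subst emeasure_distr) (simp_all add: pre lborel_prod)
  also have "\<dots> = ennreal ((u$1 - l$1) * (u$2 - l$2))"
    using l1 l2 by (simp add: lborel.emeasure_pair_measure_Times ennreal_mult)
  finally show "emeasure (distr (lborel :: (real\<times>real) measure) borel (\<lambda>p. vec2 (fst p) (snd p))) (box l u) = (\<Prod>b\<in>Basis. (u - l) \<bullet> b)"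
    by (simp add: basis_prod_2 inner_axis)
qed simp

lemma nn_integral_vec2:
  fixes F :: "real^2 \<Rightarrow> ennreal"
  assumes [measurable]: "F \<in> borel_measurable borel"
  shows "(\<integral>\<^sup>+u. F u \<partial>lborel) = (\<integral>\<^sup>+y. \<integral>\<^sup>+x. F (vec2 x y) \<partial>lborel \<partial>lborel)"
proof -
  have "(\<integral>\<^sup>+u. F u \<partial>lborel) = (\<integral>\<^sup>+p. F (vec2 (fst p) (snd p)) \<partial>(lborel::(real\<times>real) measure))"
    by (subst lborel_vec2[symmetric]) (simp add: nn_integral_distr)
  also have "\<dots> = (\<integral>\<^sup>+p. F (vec2 (fst p) (snd p)) \<partial>(lborel \<Otimes>\<^sub>M lborel))"
    by (simp add: lborel_prod)
  also have "\<dots> = (\<integral>\<^sup>+y. \<integral>\<^sup>+x. F (vec2 x y) \<partial>lborel \<partial>lborel)"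
    by (subst lborel_pair.nn_integral_snd[symmetric]) (simp_all add: lborel_prod)
  finally show ?thesis .
qed


definition ct :: "real \<Rightarrow> real" where "ct t = 1 / sqrt (1 + t^2)"
definition st :: "real \<Rightarrow> real" where "st t = t / sqrt (1 + t^2)"

lemma ct_pos: "ct t > 0" by (simp add: ct_def add_pos_nonneg)
lemma ct_sq: "ct t * ct t = 1 / (1 + t^2)"
  by (simp add: ct_def add_pos_nonneg)
lemma st_ct: "ct t * t = st t" by (simp add: ct_def st_def)
lemma st_ct_norm: "st t ^ 2 + ct t ^ 2 = 1"
proof -
  have h: "1 + t^2 > 0" by (simp add: add_pos_nonneg)
  have "st t ^ 2 + ct t ^ 2 = t^2 / (1 + t^2) + 1 / (1 + t^2)"
    using h by (simp add: ct_def st_def power_divide)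
  also have "\<dots> = 1" using h by (simp add: add_divide_distrib[symmetric])
  finally show ?thesis .
qed

lemma half_polar:
  fixes f :: "real \<Rightarrow> real \<Rightarrow> ennreal"
  assumes fm: "(\<lambda>p. f (fst p) (snd p)) \<in> borel_measurable borel"
  shows "(\<integral>\<^sup>+y. indicator {0<..} y * (\<integral>\<^sup>+x. f x y \<partial>lborel) \<partial>lborel)
       = (\<integral>\<^sup>+t. ennreal (1 / (1 + t^2)) * (\<integral>\<^sup>+r. indicator {0<..} r * ennreal r * f (r * st t) (r * ct t) \<partial>lborel) \<partial>lborel)"
proof -
  have fm2: "(\<lambda>p. f (g1 p) (g2 p)) \<in> borel_measurable M"
    if "g1 \<in> borel_measurable M" "g2 \<in> borel_measurable M" for M and g1 g2 :: "'a \<Rightarrow> real"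
  proof -
    have "(\<lambda>p. (g1 p, g2 p)) \<in> M \<rightarrow>\<^sub>M borel"
      using that by (simp add: borel_prod[symmetric])
    from measurable_compose[OF this fm] show ?thesis by simp
  qed
  have m1: "(\<lambda>x. f x y) \<in> borel_measurable borel" for y
    by (rule fm2) auto
  have step_b: "(\<integral>\<^sup>+x. f x y \<partial>lborel) = ennreal y * (\<integral>\<^sup>+t. f (y * t) y \<partial>lborel)" if "y > 0" for y
    using nn_integral_real_affine[OF m1[of y], where c=y and t=0] that by simp
  have "(\<integral>\<^sup>+y. indicator {0<..} y * (\<integral>\<^sup>+x. f x y \<partial>lborel) \<partial>lborel)
      = (\<integral>\<^sup>+y. (\<integral>\<^sup>+t. indicator {0<..} y * ennreal y * f (y * t) y \<partial>lborel) \<partial>lborel)"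
  proof (rule nn_integral_cong)
    fix y :: real
    show "indicator {0<..} y * (\<integral>\<^sup>+x. f x y \<partial>lborel) = (\<integral>\<^sup>+t. indicator {0<..} y * ennreal y * f (y * t) y \<partial>lborel)"
    proof (cases "y > 0")
      case True
      then show ?thesis
        by (simp add: step_b nn_integral_cmult[symmetric] fm2 mult.assoc)
    next
      case False
      then show ?thesis by simp
    qed
  qed
  also have "\<dots> = (\<integral>\<^sup>+t. (\<integral>\<^sup>+y. indicator {0<..} y * ennreal y * f (y * t) y \<partial>lborel) \<partial>lborel)"
  proof -
    have m0: "(\<lambda>p::real\<times>real. indicator {0<..} (snd p) * ennreal (snd p) * f (snd p * fst p) (snd p)) \<in> borel_measurable (lborel \<Otimes>\<^sub>M lborel)"
      by (intro borel_measurable_times_ennreal fm2; measurable)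
    have m: "(\<lambda>(t,y). indicator {0<..} y * ennreal y * f (y * t) y) \<in> borel_measurable (lborel \<Otimes>\<^sub>M lborel)"
      using m0 by (simp add: case_prod_beta')
    show ?thesis using lborel_pair.Fubini'[OF m] by simp
  qed
  also have "\<dots> = (\<integral>\<^sup>+t. ennreal (1 / (1 + t^2)) * (\<integral>\<^sup>+r. indicator {0<..} r * ennreal r * f (r * st t) (r * ct t) \<partial>lborel) \<partial>lborel)"
  proof (rule nn_integral_cong)
    fix t :: real
    let ?s = "ct t"
    have ms: "(\<lambda>y. indicator {0<..} y * ennreal y * f (y * t) y) \<in> borel_measurable borel"
      by (intro borel_measurable_times_ennreal fm2) auto
    have "(\<integral>\<^sup>+y. indicator {0<..} y * ennreal y * f (y * t) y \<partial>lborel)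
        = ennreal ?s * (\<integral>\<^sup>+r. indicator {0<..} (?s * r) * ennreal (?s * r) * f (?s * r * t) (?s * r) \<partial>lborel)"
      using nn_integral_real_affine[OF ms, of ?s 0] ct_pos[of t] by simp
    also have "\<dots> = ennreal ?s * (\<integral>\<^sup>+r. ennreal ?s * (indicator {0<..} r * ennreal r * f (r * st t) (r * ct t)) \<partial>lborel)"
    proof -
      have "indicator {0<..} (?s * r) * ennreal (?s * r) * f (?s * r * t) (?s * r)
          = ennreal ?s * (indicator {0<..} r * ennreal r * f (r * st t) (r * ct t))" for r
      proof -
        have "?s * r * t = r * st t" using st_ct[of t] by (simp add: algebra_simps)
        moreover have "indicator {0<..} (?s * r) = (indicator {0<..} r :: ennreal)"
          using ct_pos[of t] by (simp add: indicator_def zero_less_mult_iff)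
        moreover have "ennreal (?s * r) = ennreal ?s * ennreal r" if "r > 0"
          using ct_pos[of t] that by (simp add: ennreal_mult)
        ultimately show ?thesis
          by (cases "r > 0") (auto simp: mult.commute mult.left_commute mult.assoc)
      qed
      then show ?thesis by simp
    qed
    also have "\<dots> = ennreal (1 / (1 + t^2)) * (\<integral>\<^sup>+r. indicator {0<..} r * ennreal r * f (r * st t) (r * ct t) \<partial>lborel)"
    proof -
      have mr: "(\<lambda>r. indicator {0<..} r * ennreal r * f (r * st t) (r * ct t)) \<in> borel_measurable borel"
        by (intro borel_measurable_times_ennreal fm2) auto
      then have mr: "(\<lambda>r. indicator {0<..} r * ennreal r * f (r * st t) (r * ct t)) \<in> borel_measurable lborel"
        by simp
      have e: "(\<integral>\<^sup>+r. ennreal ?s * (indicator {0<..} r * ennreal r * f (r * st t) (r * ct t)) \<partial>lborel)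
          = ennreal ?s * (\<integral>\<^sup>+r. indicator {0<..} r * ennreal r * f (r * st t) (r * ct t) \<partial>lborel)"
        by (subst nn_integral_cmult[OF mr]) (rule refl)
      have e2: "ennreal ?s * ennreal ?s = ennreal (1 / (1 + t^2))"
        using ct_pos[of t] ct_sq[of t] by (simp add: ennreal_mult[symmetric])
      show ?thesis
        unfolding e by (simp only: mult.assoc[symmetric] e2)
    qed
    finally show "(\<integral>\<^sup>+y. indicator {0<..} y * ennreal y * f (y * t) y \<partial>lborel) = ennreal (1 / (1 + t^2)) * (\<integral>\<^sup>+r. indicator {0<..} r * ennreal r * f (r * st t) (r * ct t) \<partial>lborel)" .
  qed
  finally show ?thesis .
qed


lemma st_meas[measurable]: "st \<in> borel_measurable borel"
  unfolding st_def by (intro borel_measurable_continuous_onI continuous_intros) (auto, smt (verit) zero_le_power2)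
lemma ct_meas[measurable]: "ct \<in> borel_measurable borel"
  unfolding ct_def by (intro borel_measurable_continuous_onI continuous_intros) (auto, smt (verit) zero_le_power2)

lemma vec2_scale: "r *\<^sub>R vec2 a b = vec2 (r * a) (r * b)"
  by (simp add: vec_eq_iff forall_2)
lemma vec2_uminus: "- vec2 a b = vec2 (- a) (- b)"
  by (simp add: vec_eq_iff forall_2)

lemma vec2_meas2[measurable]:
  assumes [measurable]: "g1 \<in> borel_measurable M" "g2 \<in> borel_measurable M"
  shows "(\<lambda>p. vec2 (g1 p) (g2 p)) \<in> borel_measurable M"
proof -
  have "(\<lambda>p. (g1 p, g2 p)) \<in> M \<rightarrow>\<^sub>M borel"
    by (simp add: borel_prod[symmetric])
  from measurable_compose[OF this vec2_meas] show ?thesis by simp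
qed

definition EE :: "real \<Rightarrow> real^2" where "EE t = vec2 (st t) (ct t)"

lemma EE_meas[measurable]: "EE \<in> borel_measurable borel"
  unfolding EE_def by measurable

lemma polar:
  fixes F :: "real^2 \<Rightarrow> ennreal"
  assumes Fm[measurable]: "F \<in> borel_measurable borel"
  shows "(\<integral>\<^sup>+u. F u \<partial>lborel) = (\<integral>\<^sup>+t. ennreal (1 / (1 + t^2)) *
     (\<integral>\<^sup>+r. indicator {0<..} r * ennreal r * (F (r *\<^sub>R EE t) + F (- (r *\<^sub>R EE t))) \<partial>lborel) \<partial>lborel)"
proof -
  have mneg: "(\<lambda>p. F (vec2 (- fst p) (- snd p))) \<in> borel_measurable (borel :: (real\<times>real) measure)"
    unfolding borel_prod[symmetric] by measurable
  define G where "G y = (\<integral>\<^sup>+x. F (vec2 x y) \<partial>lborel)" for y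
  have Gm[measurable]: "G \<in> borel_measurable borel"
    unfolding G_def by measurable
  have "(\<integral>\<^sup>+u. F u \<partial>lborel) = (\<integral>\<^sup>+y. G y \<partial>lborel)"
    unfolding G_def by (rule nn_integral_vec2[OF Fm])
  also have "\<dots> = (\<integral>\<^sup>+y. indicator {0<..} y * G y + indicator {..<0} y * G y \<partial>lborel)"
    by (intro nn_integral_cong_AE eventually_mono[OF AE_lborel_singleton[of 0]])
       (auto simp: indicator_def)
  also have "\<dots> = (\<integral>\<^sup>+y. indicator {0<..} y * G y \<partial>lborel) + (\<integral>\<^sup>+y. indicator {..<0} y * G y \<partial>lborel)"
    by (rule nn_integral_add) auto
  also have "(\<integral>\<^sup>+y. indicator {..<0} y * G y \<partial>lborel) = (\<integral>\<^sup>+y. indicator {0<..} y * G (- y) \<partial>lborel)"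
  proof -
    have m: "(\<lambda>y. indicator {..<0} y * G y) \<in> borel_measurable borel" by measurable
    show ?thesis
      using nn_integral_real_affine[OF m, where c="-1" and t=0]
      by (simp add: indicator_def)
  qed
  also have "(\<integral>\<^sup>+y. indicator {0<..} y * G (- y) \<partial>lborel) = (\<integral>\<^sup>+y. indicator {0<..} y * (\<integral>\<^sup>+x. F (vec2 (- x) (- y)) \<partial>lborel) \<partial>lborel)"
  proof -
    have "G (- y) = (\<integral>\<^sup>+x. F (vec2 (- x) (- y)) \<partial>lborel)" for y
    proof -
      have m: "(\<lambda>x. F (vec2 x (- y))) \<in> borel_measurable borel" by measurable
      show ?thesis
        unfolding G_def using nn_integral_real_affine[OF m, where c="-1" and t=0] by simp
    qed
    then show ?thesis by simp
  qed
  also have "(\<integral>\<^sup>+y. indicator {0<..} y * G y \<partial>lborel) = (\<integral>\<^sup>+t. ennreal (1 / (1 + t^2)) *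
     (\<integral>\<^sup>+r. indicator {0<..} r * ennreal r * F (r *\<^sub>R EE t) \<partial>lborel) \<partial>lborel)"
    unfolding G_def
    by (subst half_polar[where f="\<lambda>x y. F (vec2 x y)"]) (simp_all add: EE_def vec2_scale)
  also have "(\<integral>\<^sup>+y. indicator {0<..} y * (\<integral>\<^sup>+x. F (vec2 (- x) (- y)) \<partial>lborel) \<partial>lborel) = (\<integral>\<^sup>+t. ennreal (1 / (1 + t^2)) *
     (\<integral>\<^sup>+r. indicator {0<..} r * ennreal r * F (- (r *\<^sub>R EE t)) \<partial>lborel) \<partial>lborel)"
    by (subst half_polar[where f="\<lambda>x y. F (vec2 (- x) (- y))"]) (simp_all add: EE_def vec2_scale vec2_uminus mneg)
  also have "(\<integral>\<^sup>+t. ennreal (1 / (1 + t^2)) * (\<integral>\<^sup>+r. indicator {0<..} r * ennreal r * F (r *\<^sub>R EE t) \<partial>lborel) \<partial>lborel)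
    + (\<integral>\<^sup>+t. ennreal (1 / (1 + t^2)) * (\<integral>\<^sup>+r. indicator {0<..} r * ennreal r * F (- (r *\<^sub>R EE t)) \<partial>lborel) \<partial>lborel)
    = (\<integral>\<^sup>+t. ennreal (1 / (1 + t^2)) * (\<integral>\<^sup>+r. indicator {0<..} r * ennreal r * F (r *\<^sub>R EE t) \<partial>lborel)
       + ennreal (1 / (1 + t^2)) * (\<integral>\<^sup>+r. indicator {0<..} r * ennreal r * F (- (r *\<^sub>R EE t)) \<partial>lborel) \<partial>lborel)"
    by (rule nn_integral_add[symmetric]) measurable
  also have "\<dots> = (\<integral>\<^sup>+t. ennreal (1 / (1 + t^2)) *
     (\<integral>\<^sup>+r. indicator {0<..} r * ennreal r * (F (r *\<^sub>R EE t) + F (- (r *\<^sub>R EE t))) \<partial>lborel) \<partial>lborel)"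
  proof (rule nn_integral_cong)
    fix t
    have "(\<integral>\<^sup>+r. indicator {0<..} r * ennreal r * (F (r *\<^sub>R EE t) + F (- (r *\<^sub>R EE t))) \<partial>lborel)
      = (\<integral>\<^sup>+r. indicator {0<..} r * ennreal r * F (r *\<^sub>R EE t) + indicator {0<..} r * ennreal r * F (- (r *\<^sub>R EE t)) \<partial>lborel)"
      by (simp add: distrib_left)
    also have "\<dots> = (\<integral>\<^sup>+r. indicator {0<..} r * ennreal r * F (r *\<^sub>R EE t) \<partial>lborel) + (\<integral>\<^sup>+r. indicator {0<..} r * ennreal r * F (- (r *\<^sub>R EE t)) \<partial>lborel)"
      by (rule nn_integral_add) measurable
    finally show "ennreal (1 / (1 + t^2)) * (\<integral>\<^sup>+r. indicator {0<..} r * ennreal r * F (r *\<^sub>R EE t) \<partial>lborel)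
       + ennreal (1 / (1 + t^2)) * (\<integral>\<^sup>+r. indicator {0<..} r * ennreal r * F (- (r *\<^sub>R EE t)) \<partial>lborel)
      = ennreal (1 / (1 + t^2)) * (\<integral>\<^sup>+r. indicator {0<..} r * ennreal r * (F (r *\<^sub>R EE t) + F (- (r *\<^sub>R EE t))) \<partial>lborel)"
      by (simp add: distrib_left)
  qed
  finally show ?thesis .
qed



lemma norm_vec2: "norm (vec2 a b) = sqrt (a^2 + b^2)"
  by (simp add: norm_eq_sqrt_inner inner_vec_def sum_2 power2_eq_square)

lemma norm_EE: "norm (EE t) = 1"
  using st_ct_norm[of t] by (simp add: EE_def norm_vec2)

lemma nn_integral_translate:
  fixes F :: "'a::euclidean_space \<Rightarrow> ennreal"
  assumes [measurable]: "F \<in> borel_measurable borel"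
  shows "(\<integral>\<^sup>+w. F w \<partial>lborel) = (\<integral>\<^sup>+u. F (v + u) \<partial>lborel)"
  by (subst (1) lborel_affine[of 1 v]) (simp_all add: nn_integral_density nn_integral_distr)

lemma K_mono:
  fixes x r s :: real
  assumes "0 \<le> r" "r \<le> s"
  shows "exp (- (x * r)) + exp (x * r) \<le> exp (- (x * s)) + exp (x * s)"
proof -
  have e: "exp (- y) + exp y = 2 * cosh y" for y :: real
    by (simp add: cosh_def)
  have c1: "cosh (x * r) = cosh (\<bar>x\<bar> * r)" using assms by (simp add: abs_mult)
  have c2: "cosh (x * s) = cosh (\<bar>x\<bar> * s)" using assms by (simp add: abs_mult)
  have c3: "cosh (\<bar>x\<bar> * r) \<le> cosh (\<bar>x\<bar> * s)"
    using assms by (subst cosh_real_nonneg_le_iff) (auto intro: mult_left_mono)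
  have "cosh (x * r) \<le> cosh (x * s)" unfolding c1 c2 by (rule c3)
  then show ?thesis unfolding e by simp
qed

lemma point_formula:
  fixes v E :: "real^2" and a c \<xi> r :: real
  assumes "norm E = 1" "r > 0"
  defines "g \<equiv> \<lambda>w. c * exp (- (a * (norm w)^2)) / sqrt ((norm (v - w))^2 + \<xi>^2)"
  shows "r * (g (v + r *\<^sub>R E) + g (v + - (r *\<^sub>R E))) =
     (c * exp (- (a * (norm v)^2))) * (r * exp (- (a * r^2)) / sqrt (r^2 + \<xi>^2)) *
     (exp (- ((2 * a * (v \<bullet> E)) * r)) + exp ((2 * a * (v \<bullet> E)) * r))"
proof -
  have n1: "norm (v - (v + r *\<^sub>R E)) = r" "norm (v - (v + - (r *\<^sub>R E))) = r"
    using assms by auto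
  have EE1: "E \<bullet> E = 1" using assms(1) by (simp add: power2_norm_eq_inner[symmetric])
  have vv: "v \<bullet> v = (norm v)^2" by (simp add: power2_norm_eq_inner)
  have n2: "(norm (v + r *\<^sub>R E))^2 = (norm v)^2 + 2 * r * (v \<bullet> E) + r^2"
    "(norm (v + - (r *\<^sub>R E)))^2 = (norm v)^2 - 2 * r * (v \<bullet> E) + r^2"
    unfolding power2_norm_eq_inner[of "v + _"]
    by (simp_all add: inner_add_left inner_add_right inner_commute EE1 vv algebra_simps power2_eq_square)
  have x1: "exp (- (a * ((norm v)^2 + 2 * r * (v \<bullet> E) + r^2))) =
     exp (- (a * (norm v)^2)) * exp (- (a * r^2)) * exp (- ((2 * a * (v \<bullet> E)) * r))"
    by (simp add: exp_add[symmetric] algebra_simps)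
  have x2: "exp (- (a * ((norm v)^2 - 2 * r * (v \<bullet> E) + r^2))) =
     exp (- (a * (norm v)^2)) * exp (- (a * r^2)) * exp ((2 * a * (v \<bullet> E)) * r)"
    by (simp add: exp_add[symmetric] algebra_simps)
  show ?thesis
    unfolding g_def n1 n2 x1 x2 by (simp add: algebra_simps add_divide_distrib)
qed



lemma mlr:
  fixes p K :: "real \<Rightarrow> real" and A \<rho> :: real
  assumes rho: "\<rho> > 0" and A: "A \<ge> 0"
    and pm[measurable]: "p \<in> borel_measurable borel"
    and Km[measurable]: "K \<in> borel_measurable borel"
    and pnn: "\<And>r. r \<ge> 0 \<Longrightarrow> p r \<ge> 0" and Knn: "\<And>r. r \<ge> 0 \<Longrightarrow> K r \<ge> 0"
    and Kmono: "\<And>r s. 0 \<le> r \<Longrightarrow> r \<le> s \<Longrightarrow> K r \<le> K s"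
    and H: "(\<integral>\<^sup>+r. indicator {0..\<rho>} r * ennreal (p r) \<partial>lborel) \<le> (\<integral>\<^sup>+r. indicator {\<rho>..} r * ennreal (p r) \<partial>lborel)"
  shows "(\<integral>\<^sup>+r. indicator {0<..} r * indicator {..\<rho>} r * ennreal (A * p r * K r) \<partial>lborel)
       \<le> (\<integral>\<^sup>+r. indicator {\<rho><..} r * ennreal (A * p r * K r) \<partial>lborel)"
proof -
  have "(\<integral>\<^sup>+r. indicator {0<..} r * indicator {..\<rho>} r * ennreal (A * p r * K r) \<partial>lborel)
      \<le> (\<integral>\<^sup>+r. ennreal (A * K \<rho>) * (indicator {0..\<rho>} r * ennreal (p r)) \<partial>lborel)"
  proof (rule nn_integral_mono)
    fix r :: real
    show "indicator {0<..} r * indicator {..\<rho>} r * ennreal (A * p r * K r) \<le> ennreal (A * K \<rho>) * (indicator {0..\<rho>} r * ennreal (p r))"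
    proof (cases "0 < r \<and> r \<le> \<rho>")
      case True
      then have "A * p r * K r \<le> A * p r * K \<rho>"
        using A pnn[of r] Knn[of r] Kmono[of r \<rho>] by (intro mult_left_mono) auto
      then have "A * p r * K r \<le> A * K \<rho> * p r" by (simp add: mult_ac)
      then show ?thesis using True A pnn[of r] Knn[of \<rho>] rho
        by (simp add: ennreal_mult[symmetric])
    qed auto
  qed
  also have "\<dots> = ennreal (A * K \<rho>) * (\<integral>\<^sup>+r. indicator {0..\<rho>} r * ennreal (p r) \<partial>lborel)"
    by (rule nn_integral_cmult) measurable
  also have "\<dots> \<le> ennreal (A * K \<rho>) * (\<integral>\<^sup>+r. indicator {\<rho>..} r * ennreal (p r) \<partial>lborel)"
    using H by (rule mult_left_mono) simp
  also have "\<dots> = (\<integral>\<^sup>+r. ennreal (A * K \<rho>) * (indicator {\<rho>..} r * ennreal (p r)) \<partial>lborel)"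
    by (rule nn_integral_cmult[symmetric]) measurable
  also have "\<dots> = (\<integral>\<^sup>+r. ennreal (A * K \<rho>) * (indicator {\<rho><..} r * ennreal (p r)) \<partial>lborel)"
    by (intro nn_integral_cong_AE eventually_mono[OF AE_lborel_singleton[of \<rho>]])
       (auto simp: indicator_def)
  also have "\<dots> \<le> (\<integral>\<^sup>+r. indicator {\<rho><..} r * ennreal (A * p r * K r) \<partial>lborel)"
  proof (rule nn_integral_mono)
    fix r :: real
    show "ennreal (A * K \<rho>) * (indicator {\<rho><..} r * ennreal (p r)) \<le> indicator {\<rho><..} r * ennreal (A * p r * K r)"
    proof (cases "\<rho> < r")
      case True
      then have "A * p r * K \<rho> \<le> A * p r * K r"
        using A pnn[of r] Knn[of \<rho>] Kmono[of \<rho> r] rho by (intro mult_left_mono) auto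
      then have "A * K \<rho> * p r \<le> A * p r * K r" by (simp add: mult_ac)
      then show ?thesis using True A pnn[of r] Knn[of \<rho>] rho
        by (simp add: ennreal_mult[symmetric] ennreal_leI)
    qed auto
  qed
  finally show ?thesis .
qed

lemma split_rho:
  fixes q :: "real \<Rightarrow> real"
  assumes [measurable]: "q \<in> borel_measurable borel" and "\<rho> > 0"
  shows "(\<integral>\<^sup>+r. indicator {0<..} r * ennreal (q r) \<partial>lborel)
    = (\<integral>\<^sup>+r. indicator {0<..} r * indicator {..\<rho>} r * ennreal (q r) \<partial>lborel)
    + (\<integral>\<^sup>+r. indicator {\<rho><..} r * ennreal (q r) \<partial>lborel)"
proof -
  have "(\<integral>\<^sup>+r. indicator {0<..} r * ennreal (q r) \<partial>lborel)
    = (\<integral>\<^sup>+r. indicator {0<..} r * indicator {..\<rho>} r * ennreal (q r) + indicator {\<rho><..} r * ennreal (q r) \<partial>lborel)"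
    using assms(2) by (intro nn_integral_cong) (auto simp: indicator_def)
  also have "\<dots> = (\<integral>\<^sup>+r. indicator {0<..} r * indicator {..\<rho>} r * ennreal (q r) \<partial>lborel)
    + (\<integral>\<^sup>+r. indicator {\<rho><..} r * ennreal (q r) \<partial>lborel)"
    by (rule nn_integral_add) measurable
  finally show ?thesis .
qed


lemma W_pos: "(\<integral>\<^sup>+t. ennreal (1 / (1 + t^2)) * indicator {0..} t \<partial>lborel) = ennreal (pi / 2)"
proof -
  have "(\<integral>\<^sup>+t. ennreal (1 / (1 + t^2)) * indicator {0..} t \<partial>lborel) = ennreal (pi / 2 - arctan 0)"
  proof (rule nn_integral_FTC_atLeast)
    show "(\<lambda>t::real. 1 / (1 + t^2)) \<in> borel_measurable borel" by measurable
    show "DERIV arctan x :> 1 / (1 + x^2)" for x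
      using DERIV_arctan[of x] by (simp add: divide_inverse)
    show "0 \<le> 1 / (1 + x^2)" for x :: real by (simp add: add_pos_nonneg less_imp_le)
    show "(arctan \<longlongrightarrow> pi / 2) at_top" by (rule tendsto_arctan_at_top)
  qed
  then show ?thesis by simp
qed

lemma W_fin: "(\<integral>\<^sup>+t. ennreal (1 / (1 + t^2)) \<partial>lborel) < \<infinity>"
proof -
  let ?f = "\<lambda>t::real. ennreal (1 / (1 + t^2))"
  have "(\<integral>\<^sup>+t. ?f t \<partial>lborel) = (\<integral>\<^sup>+t. ?f t * indicator {0..} t + ?f t * indicator {..<0} t \<partial>lborel)"
    by (intro nn_integral_cong) (auto simp: indicator_def)
  also have "\<dots> = (\<integral>\<^sup>+t. ?f t * indicator {0..} t \<partial>lborel) + (\<integral>\<^sup>+t. ?f t * indicator {..<0} t \<partial>lborel)"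
    by (rule nn_integral_add) measurable
  also have "(\<integral>\<^sup>+t. ?f t * indicator {..<0} t \<partial>lborel) = (\<integral>\<^sup>+t. ?f t * indicator {0<..} t \<partial>lborel)"
  proof -
    have m: "(\<lambda>t. ?f t * indicator {..<0} t) \<in> borel_measurable borel" by measurable
    show ?thesis using nn_integral_real_affine[OF m, where c="-1" and t=0]
      by (simp add: indicator_def)
  qed
  also have "\<dots> \<le> (\<integral>\<^sup>+t. ?f t * indicator {0..} t \<partial>lborel)"
    by (intro nn_integral_mono) (auto simp: indicator_def)
  finally have "(\<integral>\<^sup>+t. ?f t \<partial>lborel) \<le> ennreal (pi / 2) + ennreal (pi / 2)"
    unfolding W_pos by (simp add: add_left_mono)
  also have "\<dots> < \<infinity>" by simp
  finally show ?thesis .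
qed

lemma Q_fin:
  fixes a b :: real
  assumes a: "a > 0"
  shows "(\<integral>\<^sup>+r. ennreal (exp (- (a * r^2) + b * r)) \<partial>lborel) < \<infinity>"
proof -
  define m where "m = b / (2 * a)"
  define \<sigma> where "\<sigma> = 1 / sqrt (2 * a)"
  have \<sigma>pos: "\<sigma> > 0" using a by (simp add: \<sigma>_def)
  have s2: "\<sigma>^2 = 1 / (2 * a)" using a by (simp add: \<sigma>_def power_divide)
  define K where "K = exp (a * m^2) * sqrt (2 * pi * \<sigma>^2)"
  have eq: "exp (- (a * r^2) + b * r) = K * normal_density m \<sigma> r" for r
  proof -
    have "- (a * r^2) + b * r = a * m^2 + (- ((r - m)^2) / (2 * \<sigma>^2))"
      using a unfolding s2 m_def by (simp add: field_simps power2_eq_square)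
    then have "exp (- (a * r^2) + b * r) = exp (a * m^2) * exp (- ((r - m)^2) / (2 * \<sigma>^2))"
      by (simp only: exp_add)
    then show ?thesis
      unfolding K_def normal_density_def using \<sigma>pos by simp
  qed
  have Kpos: "K \<ge> 0" by (simp add: K_def)
  have "(\<integral>\<^sup>+r. ennreal (exp (- (a * r^2) + b * r)) \<partial>lborel) = (\<integral>\<^sup>+r. ennreal K * ennreal (normal_density m \<sigma> r) \<partial>lborel)"
    using Kpos by (intro nn_integral_cong) (simp only: eq ennreal_mult normal_density_nonneg)
  also have "\<dots> = ennreal K * (\<integral>\<^sup>+r. ennreal (normal_density m \<sigma> r) \<partial>lborel)"
    by (rule nn_integral_cmult) measurable
  also have "(\<integral>\<^sup>+r. ennreal (normal_density m \<sigma> r) \<partial>lborel) < \<infinity>"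
    using integrableD(2)[OF integrable_normal_density[where \<mu>=m and \<sigma>=\<sigma>]] \<sigma>pos by (simp add: less_top)
  then have "ennreal K * (\<integral>\<^sup>+r. ennreal (normal_density m \<sigma> r) \<partial>lborel) < \<infinity>"
    by (simp add: ennreal_mult_less_top)
  finally show ?thesis .
qed


lemma ptb_lemma:
  fixes v E :: "real^2" and a c \<xi> r :: real
  assumes a: "a > 0" and r: "r > 0" and c: "c \<ge> 0" and nE: "norm E = 1"
  shows "c * exp (- (a * (norm v)^2)) * (r * exp (- (a * r^2)) / sqrt (r^2 + \<xi>^2)) *
     (exp (- ((2 * a * (v \<bullet> E)) * r)) + exp ((2 * a * (v \<bullet> E)) * r))
     \<le> 2 * (c * exp (- (a * (norm v)^2))) * exp (- (a * r^2) + (2 * a * norm v) * r)"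
proof -
  define C0 where "C0 = c * exp (- (a * (norm v)^2))"
  define P where "P = r * exp (- (a * r^2)) / sqrt (r^2 + \<xi>^2)"
  define K where "K = exp (- ((2 * a * (v \<bullet> E)) * r)) + exp ((2 * a * (v \<bullet> E)) * r)"
  have C0nn: "C0 \<ge> 0" using c by (simp add: C0_def)
  have sq: "sqrt (r^2) \<le> sqrt (r^2 + \<xi>^2)" by (rule real_sqrt_le_mono) simp
  then have r1: "r \<le> sqrt (r^2 + \<xi>^2)" using r by simp
  have r2: "0 < sqrt (r^2 + \<xi>^2)" using r by (intro real_sqrt_gt_zero add_pos_nonneg) auto
  have r3: "r / sqrt (r^2 + \<xi>^2) \<le> 1" using r1 r2 by simp
  have p1: "P \<le> exp (- (a * r^2))"
    unfolding P_def using mult_right_mono[OF r3, of "exp (- (a * r^2))"] by (simp add: field_simps)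
  have Pnn: "P \<ge> 0" unfolding P_def using r by simp
  have cs: "\<bar>v \<bullet> E\<bar> \<le> norm v"
    using Cauchy_Schwarz_ineq2[of v E] nE by simp
  have ar: "0 \<le> 2 * a * r" using a r by simp
  have "(2 * a * r) * (- (v \<bullet> E)) \<le> (2 * a * r) * norm v"
    using cs by (intro mult_left_mono[OF _ ar]) auto
  then have e1: "- ((2 * a * (v \<bullet> E)) * r) \<le> 2 * a * norm v * r" by (simp add: mult_ac)
  have "(2 * a * r) * (v \<bullet> E) \<le> (2 * a * r) * norm v"
    using cs by (intro mult_left_mono[OF _ ar]) auto
  then have e2: "(2 * a * (v \<bullet> E)) * r \<le> 2 * a * norm v * r" by (simp add: mult_ac)
  have K2: "K \<le> 2 * exp (2 * a * norm v * r)"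
  proof -
    have "exp (- ((2 * a * (v \<bullet> E)) * r)) \<le> exp (2 * a * norm v * r)" using e1 by (subst exp_le_cancel_iff)
    moreover have "exp ((2 * a * (v \<bullet> E)) * r) \<le> exp (2 * a * norm v * r)" using e2 by (subst exp_le_cancel_iff)
    ultimately show ?thesis unfolding K_def by linarith
  qed
  have Knn: "K \<ge> 0" unfolding K_def by (intro add_nonneg_nonneg) auto
  have s1: "P * K \<le> exp (- (a * r^2)) * (2 * exp (2 * a * norm v * r))"
    by (rule mult_mono[OF p1 K2]) (use Pnn Knn in auto)
  have "C0 * (P * K) \<le> C0 * (exp (- (a * r^2)) * (2 * exp (2 * a * norm v * r)))"
    by (rule mult_left_mono[OF s1 C0nn])
  also have "\<dots> = 2 * C0 * exp (- (a * r^2) + (2 * a * norm v) * r)"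
    unfolding exp_add by (simp only: mult_ac)
  finally show ?thesis unfolding C0_def P_def K_def by (simp only: mult.assoc)
qed

lemma core:
  fixes v :: "real^2" and a c \<xi> \<rho> :: real
  assumes a: "a > 0" and c: "c \<ge> 0" and xi: "\<xi> \<ge> 0" and rho: "\<rho> > 0"
    and H: "(\<integral>\<^sup>+r. indicator {0..\<rho>} r * ennreal (r * exp (- (a * r^2)) / sqrt (r^2 + \<xi>^2)) \<partial>lborel)
          \<le> (\<integral>\<^sup>+r. indicator {\<rho>..} r * ennreal (r * exp (- (a * r^2)) / sqrt (r^2 + \<xi>^2)) \<partial>lborel)"
  defines "g \<equiv> \<lambda>w. c * exp (- (a * (norm w)^2)) / sqrt ((norm (v - w))^2 + \<xi>^2)"
  shows "(LINT w:{w. norm (w - v) \<le> \<rho>}|lborel. g w) \<le> 1/2 * (LINT w|lborel. g w)"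
proof -
  define p where "p r = r * exp (- (a * r^2)) / sqrt (r^2 + \<xi>^2)" for r
  define C0 where "C0 = c * exp (- (a * (norm v)^2))"
  define Kf where "Kf t r = exp (- ((2 * a * (v \<bullet> EE t)) * r)) + exp ((2 * a * (v \<bullet> EE t)) * r)" for t r
  define B where "B = {w. norm (w - v) \<le> \<rho>}"
  define wt where "wt t = ennreal (1 / (1 + t^2))" for t :: real
  have gm[measurable]: "g \<in> borel_measurable borel" unfolding g_def by measurable
  have gnn: "g w \<ge> 0" for w unfolding g_def using c by simp
  have Bm[measurable]: "B \<in> sets borel" unfolding B_def by measurable
  have pm[measurable]: "p \<in> borel_measurable borel" unfolding p_def by measurable
  have Kfm[measurable]: "(\<lambda>(t, r). Kf t r) \<in> borel_measurable (lborel \<Otimes>\<^sub>M lborel)"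
    unfolding Kf_def by measurable
  have Kfm1[measurable]: "Kf t \<in> borel_measurable borel" for t
    unfolding Kf_def by measurable
  have C0nn: "C0 \<ge> 0" unfolding C0_def using c by simp
  have pnn: "p r \<ge> 0" if "r \<ge> 0" for r unfolding p_def using that by simp
  have Kfnn: "Kf t r \<ge> 0" for t r unfolding Kf_def by (simp add: add_nonneg_nonneg)
  have Kfmono: "Kf t r \<le> Kf t s" if "0 \<le> r" "r \<le> s" for t r s
    unfolding Kf_def by (rule K_mono[OF that])

  have pf: "ennreal r * (ennreal (g (v + r *\<^sub>R EE t)) + ennreal (g (v + - (r *\<^sub>R EE t)))) = ennreal (C0 * p r * Kf t r)"
    if "r > 0" for t r
  proof -
    have "ennreal r * (ennreal (g (v + r *\<^sub>R EE t)) + ennreal (g (v + - (r *\<^sub>R EE t))))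
        = ennreal (r * (g (v + r *\<^sub>R EE t) + g (v + - (r *\<^sub>R EE t))))"
      using that gnn by (simp add: ennreal_mult ennreal_plus)
    also have "r * (g (v + r *\<^sub>R EE t) + g (v + - (r *\<^sub>R EE t))) = C0 * p r * Kf t r"
      unfolding g_def C0_def p_def Kf_def by (rule point_formula[OF norm_EE that])
    finally show ?thesis .
  qed
  have nrm: "norm ((v + r *\<^sub>R EE t) - v) = r" "norm ((v + - (r *\<^sub>R EE t)) - v) = r" if "r > 0" for r t
    using that norm_EE[of t] by auto

  have Iall: "(\<integral>\<^sup>+w. ennreal (g w) \<partial>lborel) = (\<integral>\<^sup>+t. wt t * (\<integral>\<^sup>+r. indicator {0<..} r * ennreal (C0 * p r * Kf t r) \<partial>lborel) \<partial>lborel)"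
  proof -
    have "(\<integral>\<^sup>+w. ennreal (g w) \<partial>lborel) = (\<integral>\<^sup>+u. ennreal (g (v + u)) \<partial>lborel)"
      by (rule nn_integral_translate) measurable
    also have "\<dots> = (\<integral>\<^sup>+t. wt t * (\<integral>\<^sup>+r. indicator {0<..} r * ennreal r * (ennreal (g (v + r *\<^sub>R EE t)) + ennreal (g (v + - (r *\<^sub>R EE t)))) \<partial>lborel) \<partial>lborel)"
      unfolding wt_def by (rule polar) measurable
    also have "\<dots> = (\<integral>\<^sup>+t. wt t * (\<integral>\<^sup>+r. indicator {0<..} r * ennreal (C0 * p r * Kf t r) \<partial>lborel) \<partial>lborel)"
    proof (rule nn_integral_cong, rule arg_cong2[where f="(*)"], rule refl, rule nn_integral_cong)
      fix t r :: real
      show "indicator {0<..} r * ennreal r * (ennreal (g (v + r *\<^sub>R EE t)) + ennreal (g (v + - (r *\<^sub>R EE t))))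
          = indicator {0<..} r * ennreal (C0 * p r * Kf t r)"
      proof (cases "r > 0")
        case True
        show ?thesis
          using pf[OF True, of t] True by (simp add: mult.assoc)
      qed simp
    qed
    finally show ?thesis .
  qed

  have IB: "(\<integral>\<^sup>+w. ennreal (indicator B w * g w) \<partial>lborel) = (\<integral>\<^sup>+t. wt t * (\<integral>\<^sup>+r. indicator {0<..} r * indicator {..\<rho>} r * ennreal (C0 * p r * Kf t r) \<partial>lborel) \<partial>lborel)"
  proof -
    have "(\<integral>\<^sup>+w. ennreal (indicator B w * g w) \<partial>lborel) = (\<integral>\<^sup>+u. ennreal (indicator B (v + u) * g (v + u)) \<partial>lborel)"
      by (rule nn_integral_translate) measurable
    also have "\<dots> = (\<integral>\<^sup>+t. wt t * (\<integral>\<^sup>+r. indicator {0<..} r * ennreal r * (ennreal (indicator B (v + r *\<^sub>R EE t) * g (v + r *\<^sub>R EE t)) + ennreal (indicator B (v + - (r *\<^sub>R EE t)) * g (v + - (r *\<^sub>R EE t)))) \<partial>lborel) \<partial>lborel)"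
      unfolding wt_def by (rule polar) measurable
    also have "\<dots> = (\<integral>\<^sup>+t. wt t * (\<integral>\<^sup>+r. indicator {0<..} r * indicator {..\<rho>} r * ennreal (C0 * p r * Kf t r) \<partial>lborel) \<partial>lborel)"
    proof (rule nn_integral_cong, rule arg_cong2[where f="(*)"], rule refl, rule nn_integral_cong)
      fix t r :: real
      show "indicator {0<..} r * ennreal r * (ennreal (indicator B (v + r *\<^sub>R EE t) * g (v + r *\<^sub>R EE t)) + ennreal (indicator B (v + - (r *\<^sub>R EE t)) * g (v + - (r *\<^sub>R EE t))))
          = indicator {0<..} r * indicator {..\<rho>} r * ennreal (C0 * p r * Kf t r)"
      proof (cases "r > 0")
        case True
        have i1: "indicator B (v + r *\<^sub>R EE t) = (indicator {..\<rho>} r :: real)"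
          "indicator B (v + - (r *\<^sub>R EE t)) = (indicator {..\<rho>} r :: real)"
          using nrm[OF True, of t] by (auto simp: B_def indicator_def)
        show ?thesis
          unfolding i1 using pf[OF True, of t] True by (cases "r \<le> \<rho>") (simp_all add: mult.assoc)
      qed simp
    qed
    finally show ?thesis .
  qed

  define JB where "JB t = (\<integral>\<^sup>+r. indicator {0<..} r * indicator {..\<rho>} r * ennreal (C0 * p r * Kf t r) \<partial>lborel)" for t
  define JA where "JA t = (\<integral>\<^sup>+r. indicator {0<..} r * ennreal (C0 * p r * Kf t r) \<partial>lborel)" for t
  have JBm[measurable]: "JB \<in> borel_measurable borel" unfolding JB_def by measurable
  have J2: "2 * JB t \<le> JA t" for t
  proof -
    have le: "JB t \<le> (\<integral>\<^sup>+r. indicator {\<rho><..} r * ennreal (C0 * p r * Kf t r) \<partial>lborel)"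
      unfolding JB_def
      by (rule mlr[OF rho C0nn pm Kfm1 pnn Kfnn Kfmono H[folded p_def]])
    have "JA t = JB t + (\<integral>\<^sup>+r. indicator {\<rho><..} r * ennreal (C0 * p r * Kf t r) \<partial>lborel)"
      unfolding JA_def JB_def by (rule split_rho[OF _ rho]) measurable
    then show ?thesis using le by (simp add: mult_2 add_left_mono)
  qed
  have twice: "2 * (\<integral>\<^sup>+w. ennreal (indicator B w * g w) \<partial>lborel) \<le> (\<integral>\<^sup>+w. ennreal (g w) \<partial>lborel)"
  proof -
    have "2 * (\<integral>\<^sup>+w. ennreal (indicator B w * g w) \<partial>lborel) = (\<integral>\<^sup>+t. 2 * (wt t * JB t) \<partial>lborel)"
      unfolding IB JB_def[symmetric] wt_def by (rule nn_integral_cmult[symmetric]) measurable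
    also have "\<dots> \<le> (\<integral>\<^sup>+t. wt t * JA t \<partial>lborel)"
      by (intro nn_integral_mono) (metis J2 mult.left_commute mult_left_mono zero_le)
    also have "\<dots> = (\<integral>\<^sup>+w. ennreal (g w) \<partial>lborel)"
      unfolding Iall JA_def ..
    finally show ?thesis .
  qed
  have Qf: "(\<integral>\<^sup>+r. ennreal (exp (- (a * r^2) + (2 * a * norm v) * r)) \<partial>lborel) < \<infinity>"
    by (rule Q_fin[OF a])
  have ptb: "C0 * p r * Kf t r \<le> 2 * C0 * exp (- (a * r^2) + (2 * a * norm v) * r)" if r: "r > 0" for t r
    unfolding C0_def p_def Kf_def by (rule ptb_lemma[OF a r c norm_EE])
  have JAb: "JA t \<le> ennreal (2 * C0) * (\<integral>\<^sup>+r. ennreal (exp (- (a * r^2) + (2 * a * norm v) * r)) \<partial>lborel)" for t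
  proof -
    have "JA t \<le> (\<integral>\<^sup>+r. ennreal (2 * C0) * ennreal (exp (- (a * r^2) + (2 * a * norm v) * r)) \<partial>lborel)"
      unfolding JA_def
    proof (rule nn_integral_mono)
      fix r :: real
      show "indicator {0<..} r * ennreal (C0 * p r * Kf t r) \<le> ennreal (2 * C0) * ennreal (exp (- (a * r^2) + (2 * a * norm v) * r))"
        using ptb[of r t] C0nn by (cases "r > 0") (auto simp: ennreal_mult[symmetric] ennreal_leI)
    qed
    also have "\<dots> = ennreal (2 * C0) * (\<integral>\<^sup>+r. ennreal (exp (- (a * r^2) + (2 * a * norm v) * r)) \<partial>lborel)"
      by (rule nn_integral_cmult) measurable
    finally show ?thesis .
  qed
  define Q where "Q = (\<integral>\<^sup>+r. ennreal (exp (- (a * r^2) + (2 * a * norm v) * r)) \<partial>lborel)"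
  have fin: "(\<integral>\<^sup>+w. ennreal (g w) \<partial>lborel) < \<infinity>"
  proof -
    have "(\<integral>\<^sup>+w. ennreal (g w) \<partial>lborel) = (\<integral>\<^sup>+t. wt t * JA t \<partial>lborel)"
      unfolding Iall JA_def ..
    also have "\<dots> \<le> (\<integral>\<^sup>+t. (ennreal (2 * C0) * Q) * wt t \<partial>lborel)"
      by (intro nn_integral_mono) (metis JAb Q_def mult.commute mult_right_mono zero_le)
    also have "\<dots> = (ennreal (2 * C0) * Q) * (\<integral>\<^sup>+t. wt t \<partial>lborel)"
      unfolding wt_def by (rule nn_integral_cmult) measurable
    also have "\<dots> < \<infinity>"
      using Qf W_fin unfolding Q_def wt_def by (simp add: ennreal_mult_less_top)
    finally show ?thesis .
  qed
  have LB: "(LINT w:{w. norm (w - v) \<le> \<rho>}|lborel. g w) = enn2real (\<integral>\<^sup>+w. ennreal (indicator B w * g w) \<partial>lborel)"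
    unfolding set_lebesgue_integral_def B_def[symmetric]
    by (subst integral_eq_nn_integral) (auto simp: gnn)
  have LA: "(LINT w|lborel. g w) = enn2real (\<integral>\<^sup>+w. ennreal (g w) \<partial>lborel)"
    by (subst integral_eq_nn_integral) (auto simp: gnn)
  have "enn2real (2 * (\<integral>\<^sup>+w. ennreal (indicator B w * g w) \<partial>lborel)) \<le> enn2real (\<integral>\<^sup>+w. ennreal (g w) \<partial>lborel)"
    using enn2real_mono[OF twice] fin by (simp add: less_top)
  then have "2 * enn2real (\<integral>\<^sup>+w. ennreal (indicator B w * g w) \<partial>lborel) \<le> enn2real (\<integral>\<^sup>+w. ennreal (g w) \<partial>lborel)"
    by (simp add: enn2real_mult)
  then show ?thesis unfolding LB LA by simp
qed



definition Phi0 :: "real \<Rightarrow> real" where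
  "Phi0 x = (LBINT t=0..x. exp (- (t^2)))"

lemma Phi0_deriv: "(Phi0 has_real_derivative exp (- (x^2))) (at x)"
proof -
  let ?a = "- \<bar>x\<bar> - 1" and ?b = "\<bar>x\<bar> + 1"
  have "((\<lambda>u. LBINT y=ereal 0..ereal u. exp (- (y^2))) has_vector_derivative exp (- (x^2))) (at x within {?a..?b})"
    by (rule interval_integral_FTC2) (auto intro!: continuous_intros)
  moreover have "Phi0 = (\<lambda>u. LBINT y=ereal 0..ereal u. exp (- (y^2)))"
    by (simp add: fun_eq_iff Phi0_def zero_ereal_def)
  moreover have "at x within {?a..?b} = at x"
    by (rule at_within_Icc_at) auto
  ultimately show ?thesis
    by (simp add: has_real_derivative_iff_has_vector_derivative)
qed

lemma Phi0_cont: "isCont Phi0 x"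
  using Phi0_deriv by (rule DERIV_isCont)

lemma Phi0_0[simp]: "Phi0 0 = 0"
  by (simp add: Phi0_def zero_ereal_def)

lemma Phi0_strict: "x < y \<Longrightarrow> Phi0 x < Phi0 y"
  by (rule DERIV_pos_imp_increasing[of x y Phi0]) (auto intro: Phi0_deriv)

lemma Phi0_mono: "x \<le> y \<Longrightarrow> Phi0 x \<le> Phi0 y"
  using Phi0_strict[of x y] by (cases "x = y") auto

lemma Phi0_lim: "(Phi0 \<longlongrightarrow> sqrt pi / 2) at_top"
proof -
  have hb: "has_bochner_integral lborel (\<lambda>x. indicator {0..} x *\<^sub>R exp (- x\<^sup>2)) (sqrt pi / 2)"
    by (rule gaussian_moment_0)
  have si: "set_integrable lborel {0..} (\<lambda>x::real. exp (- (x^2)))"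
    unfolding set_integrable_def using hb by (simp add: has_bochner_integral_iff)
  have sv: "set_lebesgue_integral lborel {0..} (\<lambda>x::real. exp (- (x^2))) = sqrt pi / 2"
    unfolding set_lebesgue_integral_def by (rule has_bochner_integral_integral_eq[OF hb])
  have "((\<lambda>b. set_lebesgue_integral lborel {0..b} (\<lambda>x::real. exp (- (x^2)))) \<longlongrightarrow> set_lebesgue_integral lborel {0..} (\<lambda>x::real. exp (- (x^2)))) at_top"
    by (rule tendsto_set_lebesgue_integral_at_top[OF _ si]) auto
  then have "((\<lambda>b. set_lebesgue_integral lborel {0..b} (\<lambda>x::real. exp (- (x^2)))) \<longlongrightarrow> sqrt pi / 2) at_top"
    unfolding sv .
  moreover have "eventually (\<lambda>b. set_lebesgue_integral lborel {0..b} (\<lambda>x::real. exp (- (x^2))) = Phi0 b) at_top"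
    using eventually_ge_at_top[of 0]
    by eventually_elim (simp add: Phi0_def interval_integral_Icc zero_ereal_def)
  ultimately show ?thesis
    by (rule Lim_transform_eventually)
qed

lemma erf_Phi0: "erf x = 2 / sqrt pi * Phi0 x"
  by (simp add: erf_def Phi0_def)

lemma erf_inv_half:
  obtains e0 where "e0 > 0" "Phi0 e0 = sqrt pi / 4" "erf_inv (1/2) = e0"
proof -
  have "eventually (\<lambda>b. Phi0 b > sqrt pi / 4) at_top"
    using Phi0_lim by (rule order_tendstoD) simp
  then obtain N where N: "\<And>n. n \<ge> N \<Longrightarrow> Phi0 n > sqrt pi / 4"
    unfolding eventually_at_top_linorder by blast
  define b where "b = max N 0"
  have b: "Phi0 b > sqrt pi / 4" "b \<ge> 0" using N[of b] by (auto simp: b_def)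
  have "\<exists>x\<ge>0. x \<le> b \<and> Phi0 x = sqrt pi / 4"
    using IVT[of Phi0 0 "sqrt pi / 4" b] b Phi0_cont by auto
  then obtain e0 where e0: "e0 \<ge> 0" "Phi0 e0 = sqrt pi / 4" by blast
  have "e0 \<noteq> 0" using e0 by auto
  then have pos: "e0 > 0" using e0 by simp
  have erf_e0: "erf e0 = 1/2" using e0 by (simp add: erf_Phi0)
  have "erf_inv (1/2) = e0"
    unfolding erf_inv_def
  proof (rule the_equality)
    show "erf e0 = 1/2" by (rule erf_e0)
    fix x assume "erf x = 1/2"
    then have "Phi0 x = Phi0 e0" using erf_e0 by (simp add: erf_Phi0)
    then show "x = e0"
      using Phi0_strict[of x e0] Phi0_strict[of e0 x] by (cases x e0 rule: linorder_cases) auto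
  qed
  then show ?thesis using that pos e0 by blast
qed



lemma sqrt_sum_deriv:
  assumes "r^2 + \<xi>^2 > 0"
  shows "((\<lambda>r. sqrt (r^2 + \<xi>^2)) has_real_derivative r / sqrt (r^2 + \<xi>^2)) (at r)"
  using assms by (auto intro!: derivative_eq_intros simp: field_simps)


lemma oneD_case1:
  fixes a \<xi> \<rho> \<eta> :: real
  assumes a: "a > 0" and xi: "\<xi> \<ge> 0" and rho: "\<rho> > 0"
    and eta: "Phi0 (sqrt a * \<eta>) = sqrt pi / 4" and le: "\<rho>^2 + \<xi>^2 \<le> \<eta>^2" and etapos: "\<eta> \<ge> 0"
  shows "(\<integral>\<^sup>+r. indicator {0..\<rho>} r * ennreal (r * exp (- (a * r^2)) / sqrt (r^2 + \<xi>^2)) \<partial>lborel)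
       \<le> (\<integral>\<^sup>+r. indicator {\<rho>..} r * ennreal (r * exp (- (a * r^2)) / sqrt (r^2 + \<xi>^2)) \<partial>lborel)"
proof -
  define p where "p r = r * exp (- (a * r^2)) / sqrt (r^2 + \<xi>^2)" for r
  define Phi where "Phi x = Phi0 (sqrt a * x) / sqrt a" for x
  define P where "P r = exp (a * \<xi>^2) * Phi (sqrt (r^2 + \<xi>^2))" for r
  define T where "T = exp (a * \<xi>^2) * (sqrt pi / 2 / sqrt a)"
  have sa: "sqrt a > 0" using a by simp
  have Phi_deriv: "(Phi has_real_derivative exp (- (a * x^2))) (at x)" for x
  proof -
    have "((\<lambda>x. Phi0 (sqrt a * x)) has_real_derivative exp (- ((sqrt a * x)^2)) * sqrt a) (at x)"
      by (rule DERIV_chain2[OF Phi0_deriv]) (auto intro!: derivative_eq_intros)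
    then have "(Phi has_real_derivative exp (- ((sqrt a * x)^2)) * sqrt a / sqrt a) (at x)"
      unfolding Phi_def[abs_def] by (rule DERIV_cdivide)
    moreover have "exp (- ((sqrt a * x)^2)) * sqrt a / sqrt a = exp (- (a * x^2))"
      using sa a by (simp add: power_mult_distrib)
    ultimately show ?thesis by simp
  qed
  have Phi_cont: "isCont Phi x" for x using Phi_deriv by (rule DERIV_isCont)
  have Phi_mono: "Phi x \<le> Phi y" if "x \<le> y" for x y
    unfolding Phi_def using Phi0_mono[of "sqrt a * x" "sqrt a * y"] that sa
    by (simp add: divide_right_mono mult_left_mono)
  have P_deriv: "(P has_real_derivative p r) (at r)" if "r > 0" for r
  proof -
    have pos: "r^2 + \<xi>^2 > 0" using that by (intro add_pos_nonneg) auto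
    have "((\<lambda>r. Phi (sqrt (r^2 + \<xi>^2))) has_real_derivative exp (- (a * (sqrt (r^2 + \<xi>^2))^2)) * (r / sqrt (r^2 + \<xi>^2))) (at r)"
      by (rule DERIV_chain2[OF Phi_deriv sqrt_sum_deriv[OF pos]])
    then have "(P has_real_derivative exp (a * \<xi>^2) * (exp (- (a * (sqrt (r^2 + \<xi>^2))^2)) * (r / sqrt (r^2 + \<xi>^2)))) (at r)"
      unfolding P_def[abs_def] by (rule DERIV_cmult)
    moreover have "exp (a * \<xi>^2) * (exp (- (a * (sqrt (r^2 + \<xi>^2))^2)) * (r / sqrt (r^2 + \<xi>^2))) = p r"
    proof -
      have "(sqrt (r^2 + \<xi>^2))^2 = r^2 + \<xi>^2" using pos by simp
      then have "exp (a * \<xi>^2) * exp (- (a * (sqrt (r^2 + \<xi>^2))^2)) = exp (- (a * r^2))"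
        by (simp add: exp_add[symmetric] algebra_simps)
      then show ?thesis unfolding p_def by (simp add: mult.assoc[symmetric] mult.commute)
    qed
    ultimately show ?thesis by simp
  qed
  have P_cont: "continuous_on {0..\<rho>} P"
    unfolding P_def
    by (intro continuous_intros continuous_on_compose2[OF continuous_at_imp_continuous_on, of UNIV Phi])
       (auto intro: Phi_cont)
  have pm[measurable]: "p \<in> borel_measurable borel" unfolding p_def by measurable
  have pnn: "p r \<ge> 0" if "r \<ge> 0" for r unfolding p_def using that by simp
  have "(p has_integral (P \<rho> - P 0)) {0..\<rho>}"
  proof (rule fundamental_theorem_of_calculus_interior)
    show "0 \<le> \<rho>" using rho by simp
    show "continuous_on {0..\<rho>} P" by (rule P_cont)
    show "(P has_vector_derivative p x) (at x)" if "x \<in> {0<..<\<rho>}" for x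
      using P_deriv[of x] that by (simp add: has_real_derivative_iff_has_vector_derivative)
  qed
  then have L: "(\<integral>\<^sup>+r. ennreal (p r) * indicator {0..\<rho>} r \<partial>lborel) = ennreal (P \<rho> - P 0)"
    by (rule nn_integral_has_integral_lebesgue'[rotated]) (use pnn in auto)
  have lim: "(P \<longlongrightarrow> T) at_top"
  proof -
    have f1: "filterlim (\<lambda>r. sqrt (r^2 + \<xi>^2)) at_top at_top"
    proof (rule filterlim_at_top_mono[OF filterlim_ident])
      show "eventually (\<lambda>r. r \<le> sqrt (r^2 + \<xi>^2)) at_top"
        using eventually_ge_at_top[of 0]
      proof eventually_elim
        case (elim r)
        have "sqrt (r^2) \<le> sqrt (r^2 + \<xi>^2)" by (rule real_sqrt_le_mono) simp
        then show ?case using elim by simp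
      qed
    qed
    have f2: "filterlim (\<lambda>y. sqrt a * y) at_top at_top"
      by (rule filterlim_tendsto_pos_mult_at_top[OF tendsto_const sa filterlim_ident])
    have "((\<lambda>y. Phi0 (sqrt a * y)) \<longlongrightarrow> sqrt pi / 2) at_top"
      by (rule filterlim_compose[OF Phi0_lim f2])
    then have "(Phi \<longlongrightarrow> sqrt pi / 2 / sqrt a) at_top"
      unfolding Phi_def[abs_def] by (rule tendsto_divide) (use sa in auto)
    then have "((\<lambda>r. Phi (sqrt (r^2 + \<xi>^2))) \<longlongrightarrow> sqrt pi / 2 / sqrt a) at_top"
      by (rule filterlim_compose[OF _ f1])
    then show ?thesis unfolding P_def[abs_def] T_def by (rule tendsto_mult_left)
  qed
  have R: "(\<integral>\<^sup>+r. ennreal (p r) * indicator {\<rho>..} r \<partial>lborel) = ennreal (T - P \<rho>)"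
  proof (rule nn_integral_FTC_atLeast[OF pm _ _ lim])
    show "DERIV P x :> p x" if "\<rho> \<le> x" for x using P_deriv[of x] that rho by simp
    show "0 \<le> p x" if "\<rho> \<le> x" for x using pnn[of x] that rho by simp
  qed
  have b: "sqrt (\<rho>^2 + \<xi>^2) \<le> \<eta>"
    using le etapos by (metis real_sqrt_abs abs_of_nonneg real_sqrt_le_mono)
  have Pb: "Phi (sqrt (\<rho>^2 + \<xi>^2)) \<le> sqrt pi / 4 / sqrt a"
    using Phi_mono[OF b] eta unfolding Phi_def by simp
  have P0: "Phi (sqrt (0^2 + \<xi>^2)) \<ge> 0"
    unfolding Phi_def using Phi0_mono[of 0 "sqrt a * sqrt (0^2 + \<xi>^2)"] sa by simp
  have "2 * Phi (sqrt (\<rho>^2 + \<xi>^2)) \<le> sqrt pi / 2 / sqrt a + Phi (sqrt (0^2 + \<xi>^2))"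
    using Pb P0 by simp
  then have "P \<rho> - P 0 \<le> T - P \<rho>"
    unfolding P_def T_def using mult_left_mono[of "2 * Phi (sqrt (\<rho>^2 + \<xi>^2))" "sqrt pi / 2 / sqrt a + Phi (sqrt (0^2 + \<xi>^2))" "exp (a * \<xi>^2)"]
    by (simp add: algebra_simps)
  then have "ennreal (P \<rho> - P 0) \<le> ennreal (T - P \<rho>)" by (rule ennreal_leI)
  then have "(\<integral>\<^sup>+r. ennreal (p r) * indicator {0..\<rho>} r \<partial>lborel) \<le> (\<integral>\<^sup>+r. ennreal (p r) * indicator {\<rho>..} r \<partial>lborel)"
    unfolding L R .
  then show ?thesis unfolding p_def by (simp add: mult.commute)
qed


lemma oneD_case2:
  fixes a \<xi> X :: real
  assumes a: "a > 0" and xi: "\<xi> \<ge> 0" and X: "\<xi> \<le> X"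
  defines "\<rho> \<equiv> exp (- (4 * a)) / sqrt (4 + X^2) / 2"
  shows "(\<integral>\<^sup>+r. indicator {0..\<rho>} r * ennreal (r * exp (- (a * r^2)) / sqrt (r^2 + \<xi>^2)) \<partial>lborel)
       \<le> (\<integral>\<^sup>+r. indicator {\<rho>..} r * ennreal (r * exp (- (a * r^2)) / sqrt (r^2 + \<xi>^2)) \<partial>lborel)"
proof -
  define p where "p r = r * exp (- (a * r^2)) / sqrt (r^2 + \<xi>^2)" for r
  define \<delta> where "\<delta> = exp (- (4 * a)) / sqrt (4 + X^2)"
  have X4: "0 < 4 + X^2" by (intro add_pos_nonneg) auto
  have s4: "sqrt (4 + X^2) \<ge> 2"
  proof -
    have "sqrt 4 \<le> sqrt (4 + X^2)" by (rule real_sqrt_le_mono) simp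
    then show ?thesis by simp
  qed
  have dpos: "\<delta> > 0" unfolding \<delta>_def using s4 by (intro divide_pos_pos exp_gt_zero) linarith
  have e4: "exp (- (4 * a)) < 1" using a by simp
  have dle: "\<delta> < 1/2"
  proof -
    have "\<delta> \<le> exp (- (4 * a)) / 2" unfolding \<delta>_def using s4
      by (intro divide_left_mono) (use X4 in auto)
    then show ?thesis using e4 by linarith
  qed
  have rho: "\<rho> = \<delta> / 2" unfolding \<rho>_def \<delta>_def by simp
  have rpos: "\<rho> \<ge> 0" "\<rho> < 1" using rho dpos dle by auto
  have p1: "p r \<le> 1" if "r \<ge> 0" for r
  proof -
    have "sqrt (r^2) \<le> sqrt (r^2 + \<xi>^2)" by (rule real_sqrt_le_mono) simp
    then have rs: "r \<le> sqrt (r^2 + \<xi>^2)" using that by simp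
    have sn: "sqrt (r^2 + \<xi>^2) \<ge> 0" by simp
    have q: "r / sqrt (r^2 + \<xi>^2) \<le> 1"
    proof (cases "sqrt (r^2 + \<xi>^2) = 0")
      case True then show ?thesis by simp
    next
      case False
      then have sp: "sqrt (r^2 + \<xi>^2) > 0" using sn by linarith
      show ?thesis using rs by (subst pos_divide_le_eq[OF sp]) simp
    qed
    have "exp (- (a * r^2)) \<le> 1" using a by simp
    then have "r / sqrt (r^2 + \<xi>^2) * exp (- (a * r^2)) \<le> 1 * 1"
      using q that by (intro mult_mono) auto
    then show ?thesis unfolding p_def by (simp add: field_simps)
  qed
  have p2: "p r \<ge> \<delta>" if "1 \<le> r" "r \<le> 2" for r
  proof -
    have r0: "r > 0" using that by simp
    have "r^2 + \<xi>^2 \<le> r^2 * (4 + X^2)"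
    proof -
      have "\<xi>^2 \<le> X^2" using xi X by (intro power_mono) auto
      also have "X^2 \<le> r^2 * X^2" using mult_right_mono[of 1 "r^2" "X^2"] that by (simp add: one_le_power)
      finally have "\<xi>^2 \<le> r^2 * X^2" .
      moreover have "0 \<le> r^2" by simp
      moreover have "r^2 * (4 + X^2) = 4 * r^2 + r^2 * X^2" by (simp add: algebra_simps)
      ultimately show ?thesis by linarith
    qed
    then have le2: "sqrt (r^2 + \<xi>^2) \<le> r * sqrt (4 + X^2)"
      using r0 by (metis real_sqrt_le_mono real_sqrt_mult real_sqrt_abs abs_of_pos)
    have sp: "sqrt (r^2 + \<xi>^2) > 0" using r0 by (intro real_sqrt_gt_zero add_pos_nonneg) auto
    have "1 / sqrt (4 + X^2) = r / (r * sqrt (4 + X^2))" using r0 by simp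
    also have "\<dots> \<le> r / sqrt (r^2 + \<xi>^2)"
      by (rule frac_le) (use r0 sp le2 in auto)
    finally have q: "1 / sqrt (4 + X^2) \<le> r / sqrt (r^2 + \<xi>^2)" .
    have "exp (- (4 * a)) \<le> exp (- (a * r^2))"
    proof -
      have "r^2 \<le> 2^2" using that by (intro power_mono) auto
      then show ?thesis using a by (simp add: mult_left_mono)
    qed
    then have "1 / sqrt (4 + X^2) * exp (- (4 * a)) \<le> r / sqrt (r^2 + \<xi>^2) * exp (- (a * r^2))"
      using q s4 r0 by (intro mult_mono) auto
    then show ?thesis unfolding p_def \<delta>_def by (simp add: field_simps)
  qed
  have pm[measurable]: "p \<in> borel_measurable borel" unfolding p_def by measurable
  have "(\<integral>\<^sup>+r. indicator {0..\<rho>} r * ennreal (p r) \<partial>lborel) \<le> (\<integral>\<^sup>+r. indicator {0..\<rho>} r \<partial>lborel)"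
    by (intro nn_integral_mono) (auto simp: indicator_def p1)
  also have "\<dots> = ennreal \<rho>" using rpos by simp
  also have "\<dots> \<le> ennreal \<delta>" using rho dpos by (intro ennreal_leI) simp
  also have "\<dots> = (\<integral>\<^sup>+r. ennreal \<delta> * indicator {1..2::real} r \<partial>lborel)"
    by (simp add: nn_integral_cmult_indicator)
  also have "\<dots> \<le> (\<integral>\<^sup>+r. indicator {\<rho>..} r * ennreal (p r) \<partial>lborel)"
    using rpos by (intro nn_integral_mono) (auto simp: indicator_def p2 ennreal_leI)
  finally show ?thesis unfolding p_def .
qed



theorem lemmaA1:
  fixes m\<^sub>1 \<Theta>\<^sub>1 \<kappa> \<rho>\<^sub>0 :: real
  assumes "m\<^sub>1 > 0" and "\<Theta>\<^sub>1 > 0" and "\<kappa> > 0" and "\<rho>\<^sub>0 > 0"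
  shows "\<exists>\<rho>\<^sub>1 > 0.
     (\<forall>(v::real^2) \<xi>. 0 \<le> \<xi> \<and> \<xi> \<le> \<rho>\<^sub>0 / (2 * \<kappa>) \<longrightarrow>
        (LINT w:{w. norm (w - v) \<le> \<rho>\<^sub>1}|lborel. M1 m\<^sub>1 \<Theta>\<^sub>1 w / sqrt ((norm (v - w))^2 + \<xi>^2))
        \<le> 1/2 * (LINT w|lborel. M1 m\<^sub>1 \<Theta>\<^sub>1 w / sqrt ((norm (v - w))^2 + \<xi>^2)))
   \<and> (let \<eta> = sqrt (2 * \<Theta>\<^sub>1 / m\<^sub>1) * erf_inv (1/2) in
        \<rho>\<^sub>0 < 2 * \<kappa> * \<eta> \<longrightarrow> \<rho>\<^sub>1 \<ge> sqrt (\<eta>^2 - \<rho>\<^sub>0^2 / (4 * \<kappa>^2)))"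
proof -
  note m = assms(1) and th = assms(2) and ka = assms(3) and r0 = assms(4)
  define a where "a = m\<^sub>1 / (2 * \<Theta>\<^sub>1)"
  define c where "c = (m\<^sub>1 / (2 * pi * \<Theta>\<^sub>1)) powr (3/2)"
  define X where "X = \<rho>\<^sub>0 / (2 * \<kappa>)"
  have a: "a > 0" using m th by (simp add: a_def)
  have c: "c \<ge> 0" by (simp add: c_def)
  have Xpos: "X > 0" using r0 ka by (simp add: X_def)
  obtain e0 where e0: "e0 > 0" "Phi0 e0 = sqrt pi / 4" "erf_inv (1/2) = e0"
    by (rule erf_inv_half)
  define \<eta> where "\<eta> = sqrt (2 * \<Theta>\<^sub>1 / m\<^sub>1) * erf_inv (1/2)"
  have sqa: "sqrt (2 * \<Theta>\<^sub>1 / m\<^sub>1) = 1 / sqrt a"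
    using m th by (simp add: a_def real_sqrt_divide)
  have eta_e: "sqrt a * \<eta> = e0" unfolding \<eta>_def sqa e0(3) using a by simp
  have etapos: "\<eta> > 0" unfolding \<eta>_def sqa e0(3) using a e0(1) by simp
  have Phieta: "Phi0 (sqrt a * \<eta>) = sqrt pi / 4" using eta_e e0(2) by simp
  have M1eq: "M1 m\<^sub>1 \<Theta>\<^sub>1 w = c * exp (- (a * (norm w)^2))" for w
    by (simp add: M1_def c_def a_def)
  have X2: "\<rho>\<^sub>0^2 / (4 * \<kappa>^2) = X^2"
    by (simp add: X_def power_divide power_mult_distrib)
  have main: "\<And>\<rho>\<^sub>1. \<rho>\<^sub>1 > 0 \<Longrightarrow>
     (\<And>\<xi>. 0 \<le> \<xi> \<Longrightarrow> \<xi> \<le> X \<Longrightarrow>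
        (\<integral>\<^sup>+r. indicator {0..\<rho>\<^sub>1} r * ennreal (r * exp (- (a * r^2)) / sqrt (r^2 + \<xi>^2)) \<partial>lborel)
          \<le> (\<integral>\<^sup>+r. indicator {\<rho>\<^sub>1..} r * ennreal (r * exp (- (a * r^2)) / sqrt (r^2 + \<xi>^2)) \<partial>lborel)) \<Longrightarrow>
     (\<forall>(v::real^2) \<xi>. 0 \<le> \<xi> \<and> \<xi> \<le> \<rho>\<^sub>0 / (2 * \<kappa>) \<longrightarrow>
        (LINT w:{w. norm (w - v) \<le> \<rho>\<^sub>1}|lborel. M1 m\<^sub>1 \<Theta>\<^sub>1 w / sqrt ((norm (v - w))^2 + \<xi>^2))
        \<le> 1/2 * (LINT w|lborel. M1 m\<^sub>1 \<Theta>\<^sub>1 w / sqrt ((norm (v - w))^2 + \<xi>^2)))"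
  proof (intro allI impI)
    fix \<rho>\<^sub>1 :: real and v :: "real^2" and \<xi> :: real
    assume rho: "\<rho>\<^sub>1 > 0"
      and H: "\<And>\<xi>. 0 \<le> \<xi> \<Longrightarrow> \<xi> \<le> X \<Longrightarrow>
        (\<integral>\<^sup>+r. indicator {0..\<rho>\<^sub>1} r * ennreal (r * exp (- (a * r^2)) / sqrt (r^2 + \<xi>^2)) \<partial>lborel)
          \<le> (\<integral>\<^sup>+r. indicator {\<rho>\<^sub>1..} r * ennreal (r * exp (- (a * r^2)) / sqrt (r^2 + \<xi>^2)) \<partial>lborel)"
      and xi: "0 \<le> \<xi> \<and> \<xi> \<le> \<rho>\<^sub>0 / (2 * \<kappa>)"
    have xi1: "0 \<le> \<xi>" "\<xi> \<le> X" using xi by (auto simp: X_def)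
    show "(LINT w:{w. norm (w - v) \<le> \<rho>\<^sub>1}|lborel. M1 m\<^sub>1 \<Theta>\<^sub>1 w / sqrt ((norm (v - w))^2 + \<xi>^2))
        \<le> 1/2 * (LINT w|lborel. M1 m\<^sub>1 \<Theta>\<^sub>1 w / sqrt ((norm (v - w))^2 + \<xi>^2))"
      unfolding M1eq by (rule core[OF a c xi1(1) rho H[OF xi1]])
  qed
  show ?thesis
  proof (cases "\<rho>\<^sub>0 < 2 * \<kappa> * \<eta>")
    case True
    have Xeta: "X < \<eta>" using True ka by (simp add: X_def field_simps)
    define \<rho>\<^sub>1 where "\<rho>\<^sub>1 = sqrt (\<eta>^2 - \<rho>\<^sub>0^2 / (4 * \<kappa>^2))"
    have d: "\<eta>^2 - X^2 > 0" using Xeta Xpos by (simp add: power_strict_mono)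
    have rho: "\<rho>\<^sub>1 > 0" unfolding \<rho>\<^sub>1_def X2 using d by simp
    have "\<forall>(v::real^2) \<xi>. 0 \<le> \<xi> \<and> \<xi> \<le> \<rho>\<^sub>0 / (2 * \<kappa>) \<longrightarrow>
        (LINT w:{w. norm (w - v) \<le> \<rho>\<^sub>1}|lborel. M1 m\<^sub>1 \<Theta>\<^sub>1 w / sqrt ((norm (v - w))^2 + \<xi>^2))
        \<le> 1/2 * (LINT w|lborel. M1 m\<^sub>1 \<Theta>\<^sub>1 w / sqrt ((norm (v - w))^2 + \<xi>^2))"
    proof (rule main[OF rho])
      fix \<xi> :: real assume xi: "0 \<le> \<xi>" "\<xi> \<le> X"
      have "\<rho>\<^sub>1^2 = \<eta>^2 - X^2" unfolding \<rho>\<^sub>1_def X2 using d by simp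
      moreover have "\<xi>^2 \<le> X^2" using xi by (intro power_mono) auto
      ultimately have le: "\<rho>\<^sub>1^2 + \<xi>^2 \<le> \<eta>^2" by simp
      show "(\<integral>\<^sup>+r. indicator {0..\<rho>\<^sub>1} r * ennreal (r * exp (- (a * r^2)) / sqrt (r^2 + \<xi>^2)) \<partial>lborel)
          \<le> (\<integral>\<^sup>+r. indicator {\<rho>\<^sub>1..} r * ennreal (r * exp (- (a * r^2)) / sqrt (r^2 + \<xi>^2)) \<partial>lborel)"
        by (rule oneD_case1[OF a xi(1) rho Phieta le less_imp_le[OF etapos]])
    qed
    moreover have "(let \<eta>' = sqrt (2 * \<Theta>\<^sub>1 / m\<^sub>1) * erf_inv (1/2) in
        \<rho>\<^sub>0 < 2 * \<kappa> * \<eta>' \<longrightarrow> \<rho>\<^sub>1 \<ge> sqrt (\<eta>'^2 - \<rho>\<^sub>0^2 / (4 * \<kappa>^2)))"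
      unfolding Let_def \<eta>_def[symmetric] \<rho>\<^sub>1_def by simp
    ultimately show ?thesis using rho by blast
  next
    case False
    define \<rho>\<^sub>1 where "\<rho>\<^sub>1 = exp (- (4 * a)) / sqrt (4 + X^2) / 2"
    have X4: "0 < 4 + X^2" by (intro add_pos_nonneg) auto
    have rho: "\<rho>\<^sub>1 > 0" unfolding \<rho>\<^sub>1_def using X4 by simp
    have "\<forall>(v::real^2) \<xi>. 0 \<le> \<xi> \<and> \<xi> \<le> \<rho>\<^sub>0 / (2 * \<kappa>) \<longrightarrow>
        (LINT w:{w. norm (w - v) \<le> \<rho>\<^sub>1}|lborel. M1 m\<^sub>1 \<Theta>\<^sub>1 w / sqrt ((norm (v - w))^2 + \<xi>^2))
        \<le> 1/2 * (LINT w|lborel. M1 m\<^sub>1 \<Theta>\<^sub>1 w / sqrt ((norm (v - w))^2 + \<xi>^2))"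
    proof (rule main[OF rho])
      fix \<xi> :: real assume xi: "0 \<le> \<xi>" "\<xi> \<le> X"
      show "(\<integral>\<^sup>+r. indicator {0..\<rho>\<^sub>1} r * ennreal (r * exp (- (a * r^2)) / sqrt (r^2 + \<xi>^2)) \<partial>lborel)
          \<le> (\<integral>\<^sup>+r. indicator {\<rho>\<^sub>1..} r * ennreal (r * exp (- (a * r^2)) / sqrt (r^2 + \<xi>^2)) \<partial>lborel)"
        unfolding \<rho>\<^sub>1_def by (rule oneD_case2[OF a xi])
    qed
    moreover have "(let \<eta>' = sqrt (2 * \<Theta>\<^sub>1 / m\<^sub>1) * erf_inv (1/2) in
        \<rho>\<^sub>0 < 2 * \<kappa> * \<eta>' \<longrightarrow> \<rho>\<^sub>1 \<ge> sqrt (\<eta>'^2 - \<rho>\<^sub>0^2 / (4 * \<kappa>^2)))"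
      unfolding Let_def \<eta>_def[symmetric] using False by simp
    ultimately show ?thesis using rho by blast
  qed
qed


end
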